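(* Let $\mathcal{P}=(\{\mathcal{E}_k:k\in K\},\{M_0,M_1\})$ be a concurrent quantum program on a Hilbert space $\mathcal{H}$ of finite dimension $d$, and let $\rho_0$ be an initial density operator. Then the reachable space satisfies $$\mathcal{H}_R=\operatorname{supp}\Big(\sum_{i=0}^{d-1}\mathcal{F}^i(\rho_0)\Big),\qquad\text{where }\mathcal{F}=\sum_{k\in K}\mathcal{F}_k .$$
   Context: $\mathcal{H}$ is a complex Hilbert space of finite dimension $d\ge 1$. A super-operator on $\mathcal{H}$ is a completely positive linear map $\mathcal{E}$ on the space of linear operators on $\mathcal{H}$ with $\operatorname{tr}\mathcal{E}(\rho)\le\operatorname{tr}\rho$ for all positive $\rho$; it is trace-preserving if equality always holds. For a positive semidefinite operator $\rho$, $\operatorname{supp}(\rho)$ is the subspace spanned by the eigenvectors of $\rho$ with nonzero eigenvalues. A concurrent quantum program is a pair $\mathcal{P}=(\{\mathcal{E}_k:k\in K\},\{M_0,M_1\})$ where $K=\{1,\dots,m\}$, each $\mathcal{E}_k$ is a trace-preserving super-operator on $\mathcal{H}$, and $M_0,M_1$ are operators on $\mathcal{H}$ with $M_0^\dagger M_0+M_1^\dagger M_1=I$ (the termination measurement). For $k\in K$ define the super-operator $\mathcal{F}_k(\rho)=\mathcal{E}_k(M_1\rho M_1^\dagger)$. $S_{fin}=K^*$ is the set of finite strings over $K$; for $f=s_1s_2\cdots s_n\in S_{fin}$ put $\mathcal{F}_f=\mathcal{F}_{s_n}\circ\cdots\circ\mathcal{F}_{s_1}$ (the identity map for the empty string).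 $\mathcal{F}^i$ denotes the $i$-fold composition of $\mathcal{F}$ ($\mathcal{F}^0$ the identity). The reachable space of $\mathcal{P}$ from $\rho_0$ is $\mathcal{H}_R=\bigvee_{f\in S_{fin}}\operatorname{supp}\mathcal{F}_f(\rho_0)$, where $\bigvee$ denotes the span of the union of the subspaces. *)

theory Defs
  imports "HOL-Analysis.Analysis"
begin

text \<open>Operators on a d-dimensional Hilbert space H = complex^'n (d = CARD('n)) are
  complex d x d matrices.\<close>

type_synonym 'n qop = "complex^'n^'n"

definition adj :: "'n::finite qop \<Rightarrow> 'n qop" where
  "adj A = (\<chi> i j. cnj (A $ j $ i))"

definition tr :: "'n::finite qop \<Rightarrow> complex" where
  "tr A = (\<Sum>i\<in>UNIV. A $ i $ i)"

definition msc :: "complex \<Rightarrow> 'n::finite qop \<Rightarrow> 'n qop" where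
  "msc c A = (\<chi> i j. c * A $ i $ j)"

definition qform :: "'n::finite qop \<Rightarrow> complex^'n \<Rightarrow> complex" where
  "qform A v = (\<Sum>i\<in>UNIV. cnj (v $ i) * (A *v v) $ i)"

definition psd :: "'n::finite qop \<Rightarrow> bool" where
  "psd A \<longleftrightarrow> (\<forall>v. Im (qform A v) = 0 \<and> Re (qform A v) \<ge> 0)"

text \<open>Positivity of an (n d) x (n d) matrix given as an n x n array of d x d blocks
  X i j (i, j < n).\<close>
definition block_psd :: "nat \<Rightarrow> (nat \<Rightarrow> nat \<Rightarrow> 'n::finite qop) \<Rightarrow> bool" where
  "block_psd n X \<longleftrightarrow> (\<forall>v :: nat \<Rightarrow> complex^'n.
     (let q = (\<Sum>i<n. \<Sum>j<n. \<Sum>a\<in>UNIV. cnj (v i $ a) * (X i j *v v j) $ a)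
      in Im q = 0 \<and> Re q \<ge> 0))"

definition clinear_map :: "('n::finite qop \<Rightarrow> 'n qop) \<Rightarrow> bool" where
  "clinear_map E \<longleftrightarrow> (\<forall>A B c. E (A + B) = E A + E B \<and> E (msc c A) = msc c (E A))"

text \<open>Complete positivity: id_n \<otimes> E is positive for every n (applied blockwise).\<close>
definition completely_positive :: "('n::finite qop \<Rightarrow> 'n qop) \<Rightarrow> bool" where
  "completely_positive E \<longleftrightarrow>
     (\<forall>n X. block_psd n X \<longrightarrow> block_psd n (\<lambda>i j. E (X i j)))"

definition super_operator :: "('n::finite qop \<Rightarrow> 'n qop) \<Rightarrow> bool" where
  "super_operator E \<longleftrightarrow> clinear_map E \<and> completely_positive E \<and>
     (\<forall>\<rho>. psd \<rho> \<longrightarrow> Re (tr (E \<rho>)) \<le> Re (tr \<rho>))"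

definition trace_preserving :: "('n::finite qop \<Rightarrow> 'n qop) \<Rightarrow> bool" where
  "trace_preserving E \<longleftrightarrow> (\<forall>\<rho>. psd \<rho> \<longrightarrow> tr (E \<rho>) = tr \<rho>)"

definition cspan :: "(complex^'n::finite) set \<Rightarrow> (complex^'n) set" where
  "cspan S = {x. \<exists>T c. finite T \<and> T \<subseteq> S \<and> x = (\<Sum>v\<in>T. c v *s v)}"

definition supp :: "'n::finite qop \<Rightarrow> (complex^'n) set" where
  "supp \<rho> = cspan {v. v \<noteq> 0 \<and> (\<exists>c. c \<noteq> 0 \<and> \<rho> *v v = c *s v)}"

definition Fk :: "(nat \<Rightarrow> 'n::finite qop \<Rightarrow> 'n qop) \<Rightarrow> 'n qop \<Rightarrow> nat \<Rightarrow> 'n qop \<Rightarrow> 'n qop" where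
  "Fk E M1 k \<rho> = E k (M1 ** \<rho> ** adj M1)"

text \<open>F_f for f = s1 s2 ... sn is F_sn o ... o F_s1 (s1 applied first).\<close>
definition Fstr :: "(nat \<Rightarrow> 'n::finite qop \<Rightarrow> 'n qop) \<Rightarrow> 'n qop \<Rightarrow> nat list \<Rightarrow> 'n qop \<Rightarrow> 'n qop" where
  "Fstr E M1 f \<rho> = fold (\<lambda>k r. Fk E M1 k r) f \<rho>"

definition Fsum :: "nat \<Rightarrow> (nat \<Rightarrow> 'n::finite qop \<Rightarrow> 'n qop) \<Rightarrow> 'n qop \<Rightarrow> 'n qop \<Rightarrow> 'n qop" where
  "Fsum m E M1 \<rho> = (\<Sum>k\<in>{1..m}. Fk E M1 k \<rho>)"

definition reachable_space :: "nat \<Rightarrow> (nat \<Rightarrow> 'n::finite qop \<Rightarrow> 'n qop) \<Rightarrow> 'n qop \<Rightarrow> 'n qop \<Rightarrow> (complex^'n) set" where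
  "reachable_space m E M1 \<rho>0 = cspan (\<Union>f\<in>lists {1..m}. supp (Fstr E M1 f \<rho>0))"

end

theory Submission
  imports Defs
begin


abbreviation J :: "complex^'n::finite \<Rightarrow> complex^'n" where "J x \<equiv> \<i> *s x"

lemma inner_JJ: "J a \<bullet> J (b::complex^'n::finite) = a \<bullet> b"
  by (simp add: inner_vec_def inner_complex_def algebra_simps)
lemma JJ: "J (J (a::complex^'n::finite)) = - a"
  by (simp add: vec_eq_iff)
lemma J_add: "J ((a::complex^'n::finite) + b) = J a + J b"
  by (simp add: vec_eq_iff algebra_simps)
lemma Re_qform: "Re (qform A v) = v \<bullet> (A *v v)"
  by (simp add: qform_def inner_vec_def inner_complex_def)
lemma Im_qform: "Im (qform A v) = J v \<bullet> (A *v v)"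
  by (simp add: qform_def inner_vec_def inner_complex_def algebra_simps)
lemma psd_iff: "psd A \<longleftrightarrow> (\<forall>v. J v \<bullet> (A *v v) = 0 \<and> 0 \<le> v \<bullet> (A *v v))"
  by (simp add: psd_def Re_qform Im_qform)

lemma mv_scale: "(A::complex^'n::finite^'n) *v (c *s x) = c *s (A *v x)"
  by (rule vec.scale)
lemma mv_add: "(A::complex^'n::finite^'n) *v (x + y) = A *v x + A *v y"
  by (rule vec.add)

lemma psd_herm:
  assumes "psd A"
  shows "(A *v x) \<bullet> y = x \<bullet> (A *v y)"
proof -
  have H: "J v \<bullet> (A *v v) = 0" for v using assms by (simp add: psd_iff)
  have P: "J x \<bullet> (A *v y) + J y \<bullet> (A *v x) = 0" for x y
  proof -
    have "J (x+y) \<bullet> (A *v (x+y)) = 0" by (rule H)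
    then show ?thesis using H[of x] H[of y]
      by (simp add: J_add mv_add inner_add_left inner_add_right)
  qed
  have "J (J x) \<bullet> (A *v y) + J y \<bullet> (A *v J x) = 0" by (rule P)
  then have "- (x \<bullet> (A *v y)) + y \<bullet> (A *v x) = 0"
    by (simp add: JJ mv_scale inner_JJ)
  then show ?thesis by (simp add: inner_commute)
qed




lemma scaleR_cs: "scaleR (r::real) (x::complex^'n::finite) = complex_of_real r *s x"
  by (simp add: vec_eq_iff scaleR_conv_of_real[where 'a=complex])
lemma mv_scaleR: "(A::complex^'n::finite^'n) *v (scaleR r x) = scaleR r (A *v x)"
  by (simp add: scaleR_cs mv_scale)

lemma quad0:
  fixes a b :: real
  assumes "b \<ge> 0" "\<And>t. 0 \<le> 2*t*a + t^2*b"
  shows "a = 0"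
proof -
  define t where "t = - a/(b+1)"
  have "0 \<le> 2*t*a + t^2*b" by (rule assms(2))
  then have "0 \<le> (2*t*a + t^2*b) * (b+1)^2" using assms(1) by simp
  also have "(2*t*a + t^2*b) * (b+1)^2 = - (a^2 * (b + 2))"
  proof -
    have tb: "t*(b+1) = -a" using assms(1) by (simp add: t_def)
    have "(2*t*a + t^2*b) * (b+1)^2 = 2*a*(t*(b+1))*(b+1) + (t*(b+1))^2*b"
      by (simp add: power2_eq_square algebra_simps)
    also have "... = 2*a*(-a)*(b+1) + (-a)^2*b" by (simp only: tb)
    also have "... = - (a^2 * (b + 2))" by (simp add: power2_eq_square algebra_simps)
    finally show ?thesis .
  qed
  finally have "a^2 * (b+2) \<le> 0" by simp
  moreover have "a^2 * (b+2) \<ge> 0" using assms(1) by simp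
  ultimately have "a^2 * (b+2) = 0" by linarith
  then show ?thesis using assms(1) by simp
qed

lemma quad_expand:
  assumes "psd A"
  shows "(v + scaleR t w) \<bullet> (A *v (v + scaleR t w)) =
     v \<bullet> (A *v v) + 2*t*(w \<bullet> (A *v v)) + t^2 * (w \<bullet> (A *v w))"
proof -
  have "v \<bullet> (A *v w) = w \<bullet> (A *v v)"
    using psd_herm[OF assms, of w v] by (simp add: inner_commute)
  then show ?thesis
    by (simp add: mv_add mv_scaleR inner_add_left inner_add_right power2_eq_square algebra_simps)
qed

lemma psd_zero:
  assumes "psd A" "v \<bullet> (A *v v) = 0"
  shows "A *v v = 0"
proof -
  let ?w = "A *v v"
  have pos: "0 \<le> x \<bullet> (A *v x)" for x using assms(1) by (simp add: psd_iff)
  have "?w \<bullet> ?w = 0"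
  proof (rule quad0)
    show "0 \<le> ?w \<bullet> (A *v ?w)" by (rule pos)
    fix t
    show "0 \<le> 2*t*(?w \<bullet> ?w) + t^2 * (?w \<bullet> (A *v ?w))"
      using pos[of "v + scaleR t ?w"] quad_expand[OF assms(1), of v t ?w] assms(2) by simp
  qed
  then show ?thesis by simp
qed




lemma t3: "((A::complex^'n::finite^'n) + B) *v x = A *v x + B *v x"
  by (simp add: matrix_vector_mult_def vec_eq_iff algebra_simps sum.distrib)

definition N :: "complex^'n::finite^'n \<Rightarrow> (complex^'n) set" where
  "N X = {v. X *v v = 0}"

lemma psd_add: "psd A \<Longrightarrow> psd B \<Longrightarrow> psd (A + B)"
  by (simp add: psd_iff t3 inner_add_right)
lemma psd_0: "psd (0::complex^'n::finite^'n)"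
  by (simp add: psd_iff)
lemma psd_sum: "finite K \<Longrightarrow> (\<And>k. k \<in> K \<Longrightarrow> psd (A k)) \<Longrightarrow> psd (\<Sum>k\<in>K. A k)"
  by (induction K rule: finite_induct) (auto simp: psd_0 psd_add)

lemma ker_add:
  assumes "psd A" "psd B"
  shows "N (A + B) = N A \<inter> N B"
proof
  show "N A \<inter> N B \<subseteq> N (A + B)" by (auto simp: N_def t3)
  show "N (A + B) \<subseteq> N A \<inter> N B"
  proof
    fix v assume "v \<in> N (A + B)"
    then have "A *v v + B *v v = 0" by (simp add: N_def t3)
    then have "v \<bullet> (A *v v) + v \<bullet> (B *v v) = 0" by (metis inner_add_right inner_zero_right)
    moreover have "0 \<le> v \<bullet> (A *v v)" "0 \<le> v \<bullet> (B *v v)" using assms by (auto simp: psd_iff)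
    ultimately have "v \<bullet> (A *v v) = 0" "v \<bullet> (B *v v) = 0" by linarith+
    then show "v \<in> N A \<inter> N B" using psd_zero assms by (auto simp: N_def)
  qed
qed

lemma ker_sum_sub:
  assumes "finite K" "\<And>k. k \<in> K \<Longrightarrow> psd (A k)" "k \<in> K"
  shows "N (\<Sum>k\<in>K. A k) \<subseteq> N (A k)"
proof -
  have "(\<Sum>k\<in>K. A k) = A k + (\<Sum>k\<in>K-{k}. A k)"
    using assms by (simp add: sum.remove)
  moreover have "psd (\<Sum>k\<in>K-{k}. A k)" using assms by (intro psd_sum) auto
  ultimately show ?thesis using ker_add assms by auto
qed

lemma range_ker:
  assumes "psd A"
  shows "range ((*v) A) = (N A)\<^sup>\<bottom>"
proof -
  have lin: "linear ((*v) A)" by simp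
  have adj: "adjoint ((*v) A) = (*v) A"
    by (rule adjoint_unique) (simp add: psd_herm[OF assms])
  have "N A = (range ((*v) A))\<^sup>\<bottom>"
    using ker_orthogonal_comp_adjoint[OF lin] adj by (auto simp: N_def)
  moreover have "subspace (range ((*v) A))"
    using lin linear_subspace_image subspace_UNIV by blast
  ultimately show ?thesis by (simp add: orthogonal_comp_self)
qed




lemma g_scale: "(scaleR c x) \<bullet> ((A::complex^'n::finite^'n) *v (scaleR c x)) = c^2 * (x \<bullet> (A *v x))"
  by (simp add: mv_scaleR power2_eq_square)

lemma g_cont: "continuous_on S (\<lambda>x. x \<bullet> ((A::complex^'n::finite^'n) *v x))"
  by (intro continuous_intros linear_continuous_on matrix_vector_mul_bounded_linear)

lemma eigen_exists:
  assumes "psd A" "subspace U" "(*v) A ` U \<subseteq> U" "z \<in> U" "A *v z \<noteq> 0"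
  shows "\<exists>x0\<in>U. x0 \<noteq> 0 \<and> (\<exists>\<mu>>0. A *v x0 = scaleR \<mu> x0)"
proof -
  define g where "g x = x \<bullet> (A *v x)" for x
  define S where "S = U \<inter> sphere 0 1"
  have "compact S" unfolding S_def
    by (intro closed_Int_compact closed_subspace assms compact_sphere)
  have z0: "z \<noteq> 0" using assms(5) by auto
  define z1 where "z1 = scaleR (1/norm z) z"
  have z1S: "z1 \<in> S" using z0 assms(2,4) by (simp add: S_def z1_def subspace_scale)
  then have "S \<noteq> {}" by auto
  moreover have "continuous_on S g" unfolding g_def by (rule g_cont)
  ultimately obtain x0 where x0S: "x0 \<in> S" and mx: "\<And>y. y \<in> S \<Longrightarrow> g y \<le> g x0"
    using continuous_attains_sup[OF \<open>compact S\<close>] by blast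
  define \<mu> where "\<mu> = g x0"
  have x0U: "x0 \<in> U" and nx0: "norm x0 = 1" using x0S by (auto simp: S_def)
  have gpos: "g z > 0"
  proof -
    have "g z \<ge> 0" using assms(1) by (simp add: g_def psd_iff)
    moreover have "g z \<noteq> 0" using psd_zero[OF assms(1)] assms(5) by (auto simp: g_def)
    ultimately show ?thesis by simp
  qed
  have "g z1 = (1/norm z)^2 * g z" unfolding z1_def g_def by (rule g_scale)
  then have "g z1 > 0" using gpos z0 by simp
  then have mupos: "\<mu> > 0" using mx[OF z1S] by (simp add: \<mu>_def)
  have bound: "g u \<le> \<mu> * (u \<bullet> u)" if "u \<in> U" for u
  proof (cases "u = 0")
    case True then show ?thesis by (simp add: g_def)
  next
    case False
    define u1 where "u1 = scaleR (1/norm u) u"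
    have "u1 \<in> S" using False that assms(2) by (simp add: S_def u1_def subspace_scale)
    then have "g u1 \<le> \<mu>" using mx by (simp add: \<mu>_def)
    moreover have "g u1 = (1/norm u)^2 * g u" unfolding u1_def g_def by (rule g_scale)
    ultimately have "g u \<le> \<mu> * (norm u)^2" using False
      by (simp add: field_simps)
    then show ?thesis by (simp add: power2_norm_eq_inner)
  qed
  have orth: "y \<bullet> (A *v x0) = 0" if yU: "y \<in> U" and yx: "y \<bullet> x0 = 0" for y
  proof -
    have "- (y \<bullet> (A *v x0)) = 0"
    proof (rule quad0)
      show "0 \<le> \<mu> * (y \<bullet> y) - g y" using bound[OF yU] by simp
      fix t
      have "x0 + scaleR t y \<in> U" using x0U yU assms(2) by (simp add: subspace_add subspace_scale)
      then have b: "g (x0 + scaleR t y) \<le> \<mu> * ((x0 + scaleR t y) \<bullet> (x0 + scaleR t y))"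
        by (rule bound)
      have e1: "g (x0 + scaleR t y) = \<mu> + 2*t*(y \<bullet> (A *v x0)) + t^2 * g y"
        using quad_expand[OF assms(1), of x0 t y] by (simp add: g_def \<mu>_def)
      have x00: "x0 \<bullet> x0 = 1" using nx0 by (metis power2_norm_eq_inner one_power2)
      have xy: "x0 \<bullet> y = 0" using yx by (simp add: inner_commute)
      have "(x0 + scaleR t y) \<bullet> (x0 + scaleR t y) = x0\<bullet>x0 + t*(x0\<bullet>y) + t*(y\<bullet>x0) + t*t*(y\<bullet>y)"
        by (simp only: inner_add_left inner_add_right inner_scaleR_left inner_scaleR_right) (simp add: algebra_simps)
      then have e2: "(x0 + scaleR t y) \<bullet> (x0 + scaleR t y) = 1 + t^2 * (y \<bullet> y)"
        using x00 xy yx by (simp add: power2_eq_square)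
      show "0 \<le> 2*t*(- (y \<bullet> (A *v x0))) + t^2 * (\<mu> * (y \<bullet> y) - g y)"
      proof -
        have "\<mu> + 2*t*(y \<bullet> (A *v x0)) + t^2 * g y \<le> \<mu> * (1 + t^2 * (y \<bullet> y))"
          using b by (simp only: e1 e2)
        then show ?thesis by (simp add: algebra_simps)
      qed
    qed
    then show ?thesis by simp
  qed
  define w where "w = A *v x0 - scaleR \<mu> x0"
  have wU: "w \<in> U" unfolding w_def using x0U assms(2,3)
    by (intro subspace_diff subspace_scale) auto
  have "(A *v x0) \<bullet> x0 = \<mu>"
    using psd_herm[OF assms(1), of x0 x0] by (simp add: \<mu>_def g_def)
  then have wx: "w \<bullet> x0 = 0" using nx0 by (simp add: w_def inner_diff_left power2_norm_eq_inner[symmetric])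
  have "w \<bullet> (A *v x0) = 0" by (rule orth[OF wU wx])
  then have "w \<bullet> w = 0" using wx by (simp add: w_def inner_diff_right)
  then have "A *v x0 = scaleR \<mu> x0" by (simp add: w_def)
  moreover have "x0 \<noteq> 0" using nx0 by auto
  ultimately show ?thesis using x0U mupos by blast
qed




definition EV :: "complex^'n::finite^'n \<Rightarrow> (complex^'n) set" where
  "EV X = {v. v \<noteq> 0 \<and> (\<exists>c. c \<noteq> 0 \<and> X *v v = c *s v)}"

lemma cspan_vec: "cspan S = vec.span S"
  unfolding cspan_def vec.span_explicit by auto

lemma supp_span: "supp X = vec.span (EV X)"
  by (simp add: supp_def EV_def cspan_vec)

lemma supp_sub_range: "supp X \<subseteq> range ((*v) X)"
proof -
  have "EV X \<subseteq> range ((*v) X)"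
  proof
    fix v assume "v \<in> EV X"
    then obtain c where c: "c \<noteq> 0" "X *v v = c *s v" by (auto simp: EV_def)
    then have "X *v (inverse c *s v) = v" by (simp add: mv_scale)
    then show "v \<in> range ((*v) X)" by (metis rangeI)
  qed
  moreover have "vec.subspace (range ((*v) X))"
    by (intro vec.subspace_image vec.subspace_UNIV)
  ultimately show ?thesis unfolding supp_span by (rule vec.span_minimal)
qed

lemma vsub_sub: "vec.subspace (W::(complex^'n::finite) set) \<Longrightarrow> subspace W"
  unfolding subspace_def vec.subspace_def by (simp add: scaleR_cs)

lemma range_sub_supp:
  assumes "psd X"
  shows "range ((*v) X) \<subseteq> supp X"
proof -
  let ?W = "supp X"
  have vW: "vec.subspace ?W" by (simp add: supp_span)
  then have sW: "subspace ?W" by (rule vsub_sub)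
  have inv: "X *v w \<in> ?W" if "w \<in> ?W" for w
  proof -
    have "(*v) X ` EV X \<subseteq> vec.span (EV X)"
    proof
      fix y assume "y \<in> (*v) X ` EV X"
      then obtain v c where "v \<in> EV X" "y = X *v v" "X *v v = c *s v" by (auto simp: EV_def)
      then show "y \<in> vec.span (EV X)" by (simp add: vec.span_scale vec.span_base)
    qed
    then have "vec.span ((*v) X ` EV X) \<subseteq> vec.span (EV X)"
      by (simp add: vec.span_minimal)
    then have "(*v) X ` vec.span (EV X) \<subseteq> vec.span (EV X)"
      by (simp add: vec.span_image)
    then show ?thesis using that by (auto simp: supp_span)
  qed
  let ?U = "?W\<^sup>\<bottom>"
  have sU: "subspace ?U" by (rule subspace_orthogonal_comp)
  have invU: "(*v) X ` ?U \<subseteq> ?U"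
  proof
    fix y assume "y \<in> (*v) X ` ?U"
    then obtain u where u: "u \<in> ?U" "y = X *v u" by auto
    have "w \<bullet> (X *v u) = 0" if "w \<in> ?W" for w
    proof -
      have "w \<bullet> (X *v u) = (X *v w) \<bullet> u" by (simp add: psd_herm[OF assms])
      also have "... = 0" using u(1) inv[OF that] by (auto simp: orthogonal_comp_def orthogonal_def)
      finally show ?thesis .
    qed
    then show "y \<in> ?U" using u by (auto simp: orthogonal_comp_def orthogonal_def)
  qed
  have kill: "X *v z = 0" if zU: "z \<in> ?U" for z
  proof (rule ccontr)
    assume "X *v z \<noteq> 0"
    then obtain x0 \<mu> where x0: "x0 \<in> ?U" "x0 \<noteq> 0" "\<mu> > 0" "X *v x0 = scaleR \<mu> x0"
      using eigen_exists[OF assms sU invU zU] by blast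
    then have "x0 \<in> EV X" by (auto simp: EV_def scaleR_cs)
    then have "x0 \<in> ?W" by (simp add: supp_span vec.span_base)
    then have "x0 \<bullet> x0 = 0" using x0(1) by (auto simp: orthogonal_comp_def orthogonal_def)
    then show False using x0(2) by simp
  qed
  show ?thesis
  proof
    fix y assume "y \<in> range ((*v) X)"
    then obtain x where x: "y = X *v x" by auto
    obtain a b where ab: "a \<in> span ?W" "\<And>w. w \<in> span ?W \<Longrightarrow> orthogonal b w" "x = a + b"
      by (rule orthogonal_subspace_decomp_exists[of ?W x]) blast
    have aW: "a \<in> ?W" using ab(1) sW by (simp add: span_eq_iff[THEN iffD2])
    have "b \<in> ?U" using ab(2) sW span_superset
      by (auto simp: orthogonal_comp_def orthogonal_def inner_commute)
    then have "X *v b = 0" by (rule kill)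
    then have "y = X *v a" using x ab(3) by (simp add: mv_add)
    then show "y \<in> ?W" using inv[OF aW] by simp
  qed
qed

lemma supp_range: "psd X \<Longrightarrow> supp X = range ((*v) X)"
  using supp_sub_range range_sub_supp by blast

lemma supp_ker: "psd X \<Longrightarrow> supp X = (N X)\<^sup>\<bottom>"
  using supp_range range_ker by blast




lemma mv_minus: "((A::complex^'n::finite^'n) - B) *v x = A *v x - B *v x"
  by (simp add: matrix_vector_mult_def vec_eq_iff algebra_simps sum_subtractf)
lemma msc_mv: "(msc (complex_of_real c) (A::complex^'n::finite^'n)) *v x = scaleR c (A *v x)"
  by (simp add: msc_def matrix_vector_mult_def vec_eq_iff scaleR_conv_of_real[where 'a=complex]
      sum_distrib_left algebra_simps)

lemma g_ker:
  assumes "psd A" "A *v k = 0"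
  shows "(k + p) \<bullet> (A *v (k + p)) = p \<bullet> (A *v p)"
proof -
  have "k \<bullet> (A *v p) = 0" using psd_herm[OF assms(1), of k p] assms(2) by simp
  then show ?thesis using assms(2) by (simp add: mv_add inner_add_left)
qed

lemma N_vsub: "vec.subspace (N X)"
  unfolding N_def by (rule vec.subspace_kernel)

lemma dom:
  assumes "psd \<sigma>" "psd \<tau>" "N \<tau> \<subseteq> N \<sigma>"
  shows "\<exists>c\<ge>0. \<forall>x. x \<bullet> (\<sigma> *v x) \<le> c * (x \<bullet> (\<tau> *v x))"
proof -
  define K where "K = N \<tau>"
  have sK: "subspace K" unfolding K_def by (rule vsub_sub[OF N_vsub])
  define P where "P = K\<^sup>\<bottom>"
  have sP: "subspace P" unfolding P_def by (rule subspace_orthogonal_comp)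
  define S where "S = P \<inter> sphere 0 1"
  have cS: "compact S" unfolding S_def
    by (intro closed_Int_compact closed_subspace sP compact_sphere)
  have decomp: "\<exists>p\<in>P. x \<bullet> (\<tau> *v x) = p \<bullet> (\<tau> *v p) \<and> x \<bullet> (\<sigma> *v x) = p \<bullet> (\<sigma> *v p)" for x
  proof -
    obtain a b where ab: "a \<in> span K" "\<And>w. w \<in> span K \<Longrightarrow> orthogonal b w" "x = a + b"
      by (rule orthogonal_subspace_decomp_exists[of K x]) blast
    have aK: "a \<in> K" using ab(1) sK by (simp add: span_eq_iff[THEN iffD2])
    have bP: "b \<in> P" using ab(2) sK span_superset
      by (auto simp: P_def orthogonal_comp_def orthogonal_def inner_commute)
    have "\<tau> *v a = 0" "\<sigma> *v a = 0" using aK assms(3) by (auto simp: K_def N_def)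
    then show ?thesis using bP ab(3) g_ker assms(1,2) by metis
  qed
  have key: "\<exists>c\<ge>0. \<forall>p\<in>P. p \<bullet> (\<sigma> *v p) \<le> c * (p \<bullet> (\<tau> *v p))"
  proof (cases "S = {}")
    case True
    have "p = 0" if "p \<in> P" for p
    proof (rule ccontr)
      assume "p \<noteq> 0"
      then have "scaleR (1/norm p) p \<in> S" using that sP by (simp add: S_def subspace_scale)
      then show False using True by simp
    qed
    then show ?thesis by (intro exI[of _ 0]) force
  next
    case False
    obtain x1 where x1: "x1 \<in> S" "\<And>y. y \<in> S \<Longrightarrow> x1 \<bullet> (\<tau> *v x1) \<le> y \<bullet> (\<tau> *v y)"
      using continuous_attains_inf[OF cS False g_cont] by blast
    obtain x2 where x2: "x2 \<in> S" "\<And>y. y \<in> S \<Longrightarrow> y \<bullet> (\<sigma> *v y) \<le> x2 \<bullet> (\<sigma> *v x2)"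
      using continuous_attains_sup[OF cS False g_cont] by blast
    define m where "m = x1 \<bullet> (\<tau> *v x1)"
    define M where "M = x2 \<bullet> (\<sigma> *v x2)"
    have "m \<ge> 0" using assms(2) by (simp add: m_def psd_iff)
    moreover have "m \<noteq> 0"
    proof
      assume "m = 0"
      then have "\<tau> *v x1 = 0" using psd_zero[OF assms(2)] by (simp add: m_def)
      then have "x1 \<in> K" by (simp add: K_def N_def)
      moreover have "x1 \<in> P" using x1(1) by (simp add: S_def)
      ultimately have "x1 \<bullet> x1 = 0" by (auto simp: P_def orthogonal_comp_def orthogonal_def)
      then show False using x1(1) by (simp add: S_def)
    qed
    ultimately have mpos: "m > 0" by simp
    have Mnn: "M \<ge> 0" using assms(1) by (simp add: M_def psd_iff)
    show ?thesis
    proof (intro exI[of _ "M/m"] conjI ballI)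
      show "0 \<le> M/m" using mpos Mnn by simp
      fix p assume pP: "p \<in> P"
      show "p \<bullet> (\<sigma> *v p) \<le> M / m * (p \<bullet> (\<tau> *v p))"
      proof (cases "p = 0")
        case True then show ?thesis by simp
      next
        case pn: False
        define p1 where "p1 = scaleR (1/norm p) p"
        have p1S: "p1 \<in> S" using pn pP sP by (simp add: S_def p1_def subspace_scale)
        have es: "p1 \<bullet> (\<sigma> *v p1) = (1/norm p)^2 * (p \<bullet> (\<sigma> *v p))"
          unfolding p1_def by (rule g_scale)
        have et: "p1 \<bullet> (\<tau> *v p1) = (1/norm p)^2 * (p \<bullet> (\<tau> *v p))"
          unfolding p1_def by (rule g_scale)
        have np: "norm p > 0" using pn by simp
        have "(1/norm p)^2 * (p \<bullet> (\<sigma> *v p)) \<le> M" using x2(2)[OF p1S] es by (simp add: M_def)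
        then have A1: "p \<bullet> (\<sigma> *v p) \<le> M * (norm p)^2" using np by (simp add: field_simps)
        have "m \<le> (1/norm p)^2 * (p \<bullet> (\<tau> *v p))" using x1(2)[OF p1S] et by (simp add: m_def)
        then have A2: "m * (norm p)^2 \<le> p \<bullet> (\<tau> *v p)" using np by (simp add: field_simps)
        have "M * (norm p)^2 = M/m * (m * (norm p)^2)" using mpos by simp
        also have "... \<le> M/m * (p \<bullet> (\<tau> *v p))"
          using A2 mpos Mnn by (intro mult_left_mono) auto
        finally show ?thesis using A1 by simp
      qed
    qed
  qed
  then obtain c where c: "c \<ge> 0" "\<forall>p\<in>P. p \<bullet> (\<sigma> *v p) \<le> c * (p \<bullet> (\<tau> *v p))" by blast
  show ?thesis
  proof (intro exI[of _ c] conjI allI)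
    fix x
    from decomp[of x] obtain p where "p \<in> P" "x \<bullet> (\<tau> *v x) = p \<bullet> (\<tau> *v p)"
      "x \<bullet> (\<sigma> *v x) = p \<bullet> (\<sigma> *v p)" by blast
    then show "x \<bullet> (\<sigma> *v x) \<le> c * (x \<bullet> (\<tau> *v x))" using c by simp
  qed (rule c(1))
qed

definition posmap :: "('n::finite qop \<Rightarrow> 'n qop) \<Rightarrow> bool" where
  "posmap \<Phi> \<longleftrightarrow> (\<forall>A B. \<Phi> (A + B) = \<Phi> A + \<Phi> B) \<and> (\<forall>c A. \<Phi> (msc c A) = msc c (\<Phi> A))
     \<and> (\<forall>A. psd A \<longrightarrow> psd (\<Phi> A))"

lemma ker_mono_map:
  assumes "posmap \<Phi>" "psd \<sigma>" "psd \<tau>" "N \<tau> \<subseteq> N \<sigma>"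
  shows "N (\<Phi> \<tau>) \<subseteq> N (\<Phi> \<sigma>)"
proof
  obtain c where c: "c \<ge> 0" "\<And>x. x \<bullet> (\<sigma> *v x) \<le> c * (x \<bullet> (\<tau> *v x))"
    using dom[OF assms(2-4)] by blast
  define D where "D = msc (complex_of_real c) \<tau> - \<sigma>"
  have "psd D"
    using assms(2,3) c by (simp add: psd_iff D_def mv_minus msc_mv inner_diff_right)
  then have pD: "psd (\<Phi> D)" using assms(1) by (simp add: posmap_def)
  have "\<Phi> (D + \<sigma>) = \<Phi> D + \<Phi> \<sigma>" using assms(1) by (simp add: posmap_def)
  moreover have "D + \<sigma> = msc (complex_of_real c) \<tau>" by (simp add: D_def)
  ultimately have PD: "\<Phi> D = msc (complex_of_real c) (\<Phi> \<tau>) - \<Phi> \<sigma>"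
    using assms(1) by (simp add: posmap_def eq_diff_eq)
  fix v assume "v \<in> N (\<Phi> \<tau>)"
  then have vt: "\<Phi> \<tau> *v v = 0" by (simp add: N_def)
  have "0 \<le> v \<bullet> (\<Phi> D *v v)" using pD by (simp add: psd_iff)
  then have "v \<bullet> (\<Phi> \<sigma> *v v) \<le> 0" using vt by (simp add: PD mv_minus msc_mv inner_diff_right)
  moreover have "0 \<le> v \<bullet> (\<Phi> \<sigma> *v v)" using assms(1,2) by (simp add: posmap_def psd_iff)
  ultimately have "v \<bullet> (\<Phi> \<sigma> *v v) = 0" by simp
  moreover have "psd (\<Phi> \<sigma>)" using assms(1,2) by (simp add: posmap_def)
  ultimately show "v \<in> N (\<Phi> \<sigma>)" using psd_zero by (simp add: N_def)
qed




lemma cinner: "(a::complex) \<bullet> b = Re (cnj a * b)"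
  by (simp add: inner_complex_def)

lemma inner_vec_Re: "(v::complex^'n::finite) \<bullet> w = Re (\<Sum>i\<in>UNIV. cnj (v$i) * w$i)"
  by (simp add: inner_vec_def cinner Re_sum)

lemma adj_inner: "v \<bullet> ((M::complex^'n::finite^'n) *v w) = (adj M *v v) \<bullet> w"
proof -
  have "(\<Sum>i\<in>UNIV. cnj (v$i) * (M *v w)$i) = (\<Sum>i\<in>UNIV. \<Sum>j\<in>UNIV. cnj (v$i) * M$i$j * w$j)"
    by (simp add: matrix_vector_mult_def sum_distrib_left mult.assoc)
  also have "... = (\<Sum>j\<in>UNIV. \<Sum>i\<in>UNIV. cnj (v$i) * M$i$j * w$j)"
    by (rule sum.swap)
  also have "... = (\<Sum>i\<in>UNIV. cnj ((adj M *v v)$i) * w$i)"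
    by (simp add: matrix_vector_mult_def adj_def cnj_sum sum_distrib_right sum_distrib_left mult_ac)
  finally show ?thesis by (simp only: inner_vec_Re)
qed

lemma psd_conj: "psd A \<Longrightarrow> psd (M ** A ** adj M)"
proof -
  assume pA: "psd A"
  have e: "(M ** A ** adj M) *v v = M *v (A *v (adj M *v v))" for v
    by (simp add: matrix_vector_mul_assoc matrix_mul_assoc)
  show ?thesis unfolding psd_iff
  proof
    fix v
    have "J v \<bullet> ((M ** A ** adj M) *v v) = J (adj M *v v) \<bullet> (A *v (adj M *v v))"
      by (simp add: e adj_inner mv_scale)
    moreover have "v \<bullet> ((M ** A ** adj M) *v v) = (adj M *v v) \<bullet> (A *v (adj M *v v))"
      by (simp add: e adj_inner)
    ultimately show "J v \<bullet> ((M ** A ** adj M) *v v) = 0 \<and> 0 \<le> v \<bullet> ((M ** A ** adj M) *v v)"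
      using pA by (simp add: psd_iff)
  qed
qed

lemma block1: "block_psd 1 (\<lambda>i j. X) \<longleftrightarrow> psd X"
proof -
  have one: "{..<1::nat} = {0}" by auto
  show ?thesis
  proof
    assume B: "block_psd 1 (\<lambda>i j. X)"
    show "psd X" unfolding psd_def qform_def
    proof
      fix w
      show "Im (\<Sum>i\<in>UNIV. cnj (w $ i) * (X *v w) $ i) = 0 \<and> 0 \<le> Re (\<Sum>i\<in>UNIV. cnj (w $ i) * (X *v w) $ i)"
        using B unfolding block_psd_def Let_def one by (drule_tac x="\<lambda>_. w" in spec) simp
    qed
  next
    assume "psd X"
    then show "block_psd 1 (\<lambda>i j. X)" unfolding block_psd_def psd_def qform_def Let_def one
      by simp
  qed
qed

lemma cp_psd: "completely_positive \<Phi> \<Longrightarrow> psd A \<Longrightarrow> psd (\<Phi> A)"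
proof -
  assume cp: "completely_positive \<Phi>" and "psd A"
  then have "block_psd 1 (\<lambda>i j. A)" using block1 by blast
  then have "block_psd 1 (\<lambda>i j. \<Phi> A)" using cp unfolding completely_positive_def by blast
  then show ?thesis using block1 by blast
qed

lemma msc_mult_l: "msc c A ** B = msc c (A ** (B::complex^'n::finite^'n))"
  by (simp add: vec_eq_iff msc_def matrix_matrix_mult_def sum_distrib_left mult.assoc)
lemma msc_mult_r: "A ** msc c B = msc c (A ** (B::complex^'n::finite^'n))"
  by (simp add: vec_eq_iff msc_def matrix_matrix_mult_def sum_distrib_left mult_ac)
lemma msc_add: "msc c (A + B) = msc c A + msc c (B::complex^'n::finite^'n)"
  by (simp add: vec_eq_iff msc_def algebra_simps)
lemma msc_0: "msc c 0 = (0::complex^'n::finite^'n)"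
  by (simp add: vec_eq_iff msc_def)
lemma msc_sum: "finite K \<Longrightarrow> msc c (\<Sum>k\<in>K. A k) = (\<Sum>k\<in>K. msc c (A k::complex^'n::finite^'n))"
  by (induction K rule: finite_induct) (auto simp: msc_0 msc_add)

lemma matrix_add_rdistrib': "(A + B) ** (C::complex^'n::finite^'n) = A ** C + B ** C"
  by (simp add: vec_eq_iff matrix_matrix_mult_def algebra_simps sum.distrib)

lemma posmap_0: "posmap \<Phi> \<Longrightarrow> \<Phi> 0 = 0"
  unfolding posmap_def by (metis add_cancel_right_right add.right_neutral)

lemma posmap_sum:
  assumes "posmap \<Phi>"
  shows "finite I \<Longrightarrow> \<Phi> (\<Sum>i\<in>I. X i) = (\<Sum>i\<in>I. \<Phi> (X i))"
proof (induction I rule: finite_induct)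
  case empty then show ?case using posmap_0[OF assms] by simp
next
  case (insert x F) then show ?case using assms by (simp add: posmap_def)
qed

lemma posmap_Fk:
  assumes "super_operator (E k)"
  shows "posmap (Fk E M1 k)"
  using assms unfolding posmap_def super_operator_def clinear_map_def Fk_def
  by (auto simp: matrix_add_ldistrib matrix_add_rdistrib' msc_mult_l msc_mult_r psd_conj cp_psd)

lemma posmap_Fsum:
  fixes E :: "nat \<Rightarrow> 'n::finite qop \<Rightarrow> 'n qop"
  assumes "\<forall>k\<in>{1..m}. super_operator (E k)"
  shows "posmap (Fsum m E M1)"
proof -
  have P: "posmap (Fk E M1 k)" if "k \<in> {1..m}" for k using assms that posmap_Fk by blast
  show ?thesis unfolding posmap_def Fsum_def
  proof (intro conjI allI impI)
    fix A B show "(\<Sum>k\<in>{1..m}. Fk E M1 k (A + B)) = (\<Sum>k\<in>{1..m}. Fk E M1 k A) + (\<Sum>k\<in>{1..m}. Fk E M1 k B)"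
      using P by (simp add: posmap_def sum.distrib[symmetric])
  next
    fix c A show "(\<Sum>k\<in>{1..m}. Fk E M1 k (msc c A)) = msc c (\<Sum>k\<in>{1..m}. Fk E M1 k A)"
      using P by (simp add: posmap_def msc_sum)
  next
    fix A :: "'n qop" assume "psd A" then show "psd (\<Sum>k\<in>{1..m}. Fk E M1 k A)"
      using P by (intro psd_sum) (auto simp: posmap_def)
  qed
qed




lemma mv_axis: "((A::complex^'n::finite^'n) *v axis j 1) $ i = A $ i $ j"
  by (simp add: matrix_vector_mult_def axis_def if_distrib cong: if_cong)

lemma Fstr_snoc: "Fstr E M1 (f @ [k]) \<rho> = Fk E M1 k (Fstr E M1 f \<rho>)"
  by (simp add: Fstr_def)

inductive_set gen for E :: "nat \<Rightarrow> 'n::finite qop \<Rightarrow> 'n qop" and M1 m \<rho>0 where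
  gen0: "0 \<in> gen E M1 m \<rho>0"
| genS: "X \<in> gen E M1 m \<rho>0 \<Longrightarrow> g \<in> lists {1..m} \<Longrightarrow> X + Fstr E M1 g \<rho>0 \<in> gen E M1 m \<rho>0"

context
  fixes m :: nat and E :: "nat \<Rightarrow> 'n::finite qop \<Rightarrow> 'n qop" and M1 \<rho>0 :: "'n qop"
  assumes SO: "\<forall>k\<in>{1..m}. super_operator (E k)" and P0: "psd \<rho>0" and T1: "tr \<rho>0 = 1"
begin

abbreviation "F \<equiv> Fsum m E M1"

lemma pF: "posmap F" using SO by (rule posmap_Fsum)
lemma pFk: "k \<in> {1..m} \<Longrightarrow> posmap (Fk E M1 k)" using SO posmap_Fk by blast

lemma psd_Fi: "psd ((F^^i) \<rho>0)"
  by (induction i) (use P0 pF in \<open>auto simp: posmap_def\<close>)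

lemma psd_Fstr: "f \<in> lists {1..m} \<Longrightarrow> psd (Fstr E M1 f \<rho>0)"
proof (induction f rule: rev_induct)
  case Nil then show ?case using P0 by (simp add: Fstr_def)
next
  case (snoc k f) then show ?case using pFk[of k] by (simp add: Fstr_snoc posmap_def)
qed

definition T :: "nat \<Rightarrow> 'n qop" where "T j = (\<Sum>i<Suc j. (F^^i) \<rho>0)"

lemma psd_T: "psd (T j)" unfolding T_def by (intro psd_sum psd_Fi) auto

lemma T0: "T 0 = \<rho>0" by (simp add: T_def)

lemma T_Suc: "T (Suc j) = \<rho>0 + F (T j)"
proof -
  have "T (Suc j) = (F^^0) \<rho>0 + (\<Sum>i<Suc j. (F^^Suc i) \<rho>0)"
    unfolding T_def by (rule sum.lessThan_Suc_shift)
  also have "... = \<rho>0 + (\<Sum>i<Suc j. F ((F^^i) \<rho>0))" by simp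
  also have "(\<Sum>i<Suc j. F ((F^^i) \<rho>0)) = F (T j)"
    unfolding T_def by (rule posmap_sum[OF pF finite_lessThan, symmetric])
  finally show ?thesis .
qed

lemma NT_Suc: "N (T (Suc j)) = N \<rho>0 \<inter> N (F (T j))"
  unfolding T_Suc using P0 psd_T pF by (intro ker_add) (auto simp: posmap_def)

lemma NT_mono: "N (T (Suc j)) \<subseteq> N (T j)"
proof (induction j)
  case 0 then show ?case by (simp add: NT_Suc T0)
next
  case (Suc j)
  have "N (F (T (Suc j))) \<subseteq> N (F (T j))"
    by (rule ker_mono_map[OF pF psd_T psd_T Suc])
  then show ?case by (auto simp: NT_Suc)
qed

lemma NT_antimono: "i \<le> j \<Longrightarrow> N (T j) \<subseteq> N (T i)"
  using lift_Suc_antimono_le[of "\<lambda>j. N (T j)"] NT_mono by blast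

lemma NT_stable: "N (T (Suc j)) = N (T j) \<Longrightarrow> N (T (Suc (Suc j))) = N (T (Suc j))"
proof -
  assume eq: "N (T (Suc j)) = N (T j)"
  have "N (F (T j)) \<subseteq> N (F (T (Suc j)))"
    by (rule ker_mono_map[OF pF psd_T psd_T]) (use eq in simp)
  then have "N (T (Suc j)) \<subseteq> N (T (Suc (Suc j)))" by (auto simp: NT_Suc)
  then show ?thesis using NT_mono by blast
qed

lemma NT_stable_all:
  assumes "N (T (Suc j0)) = N (T j0)" "j0 \<le> j"
  shows "N (T j) = N (T j0)"
proof -
  have "N (T j) = N (T j0) \<and> N (T (Suc j)) = N (T j)" using assms(2)
  proof (induction j rule: dec_induct)
    case base then show ?case using assms(1) by simp
  next
    case (step j) then show ?case using NT_stable by simp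
  qed
  then show ?thesis by simp
qed

lemma N_rho0_ne: "N \<rho>0 \<noteq> UNIV"
proof
  assume "N \<rho>0 = UNIV"
  then have "\<rho>0 *v v = 0" for v by (auto simp: N_def)
  then have "\<rho>0 $ i $ j = 0" for i j using mv_axis[of \<rho>0 j i] by simp
  then have "tr \<rho>0 = 0" by (simp add: tr_def)
  then show False using T1 by simp
qed

lemma dim_N0: "vec.dim (N \<rho>0) < CARD('n)"
proof -
  have le: "vec.dim (N \<rho>0) \<le> vec.dim (UNIV :: (complex^'n) set)" by (rule vec.dim_subset) simp
  have "vec.dim (N \<rho>0) \<noteq> vec.dim (UNIV :: (complex^'n) set)"
  proof
    assume "vec.dim (N \<rho>0) = vec.dim (UNIV :: (complex^'n) set)"
    then have "N \<rho>0 = UNIV"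
      by (intro vec.subspace_dim_equal N_vsub vec.subspace_UNIV) auto
    then show False using N_rho0_ne by simp
  qed
  moreover have "vec.dim (UNIV :: (complex^'n) set) = CARD('n)" by (rule vec_dim_card)
  ultimately show ?thesis using le by simp
qed

lemma exists_stable: "\<exists>j0<CARD('n). N (T (Suc j0)) = N (T j0)"
proof (rule ccontr)
  assume "\<not> ?thesis"
  then have ne: "N (T (Suc j)) \<noteq> N (T j)" if "j < CARD('n)" for j using that by blast
  have "vec.dim (N (T j)) + j \<le> vec.dim (N \<rho>0)" if "j \<le> CARD('n)" for j
    using that
  proof (induction j)
    case 0 then show ?case by (simp add: T0)
  next
    case (Suc j)
    have "N (T (Suc j)) \<subset> N (T j)" using NT_mono ne[of j] Suc.prems by auto
    then have "vec.dim (N (T (Suc j))) < vec.dim (N (T j))"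
      using vec.dim_psubset vec.span_eq_iff N_vsub by metis
    then show ?case using Suc by simp
  qed
  from this[of "CARD('n)"] dim_N0 show False by simp
qed

lemma NT_final: "N (T (CARD('n) - 1)) \<subseteq> N (T j)"
proof -
  obtain j0 where j0: "j0 < CARD('n)" "N (T (Suc j0)) = N (T j0)" using exists_stable by blast
  show ?thesis
  proof (cases "j \<le> CARD('n) - 1")
    case True then show ?thesis by (rule NT_antimono)
  next
    case False
    then have "N (T j) = N (T j0)" "N (T (CARD('n) - 1)) = N (T j0)"
      using j0 by (auto intro!: NT_stable_all)
    then show ?thesis by simp
  qed
qed

lemma NT_Fi: "N (T j) \<subseteq> N ((F^^j) \<rho>0)"
  unfolding T_def by (rule ker_sum_sub) (auto intro: psd_Fi)

lemma NF_Fk: "k \<in> {1..m} \<Longrightarrow> psd Y \<Longrightarrow> N (F Y) \<subseteq> N (Fk E M1 k Y)"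
  unfolding Fsum_def by (rule ker_sum_sub) (use pFk in \<open>auto simp: posmap_def\<close>)

lemma NFi_str: "f \<in> lists {1..m} \<Longrightarrow> N ((F^^length f) \<rho>0) \<subseteq> N (Fstr E M1 f \<rho>0)"
proof (induction f rule: rev_induct)
  case Nil then show ?case by (simp add: Fstr_def)
next
  case (snoc k f)
  then have k: "k \<in> {1..m}" and f: "f \<in> lists {1..m}" by auto
  have "N ((F^^length (f@[k])) \<rho>0) = N (F ((F^^length f) \<rho>0))" by simp
  also have "... \<subseteq> N (Fk E M1 k ((F^^length f) \<rho>0))" by (rule NF_Fk[OF k psd_Fi])
  also have "... \<subseteq> N (Fk E M1 k (Fstr E M1 f \<rho>0))"
    by (rule ker_mono_map[OF pFk[OF k] psd_Fstr[OF f] psd_Fi snoc.IH[OF f]])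
  finally show ?case by (simp add: Fstr_snoc)
qed

abbreviation "G \<equiv> gen E M1 m \<rho>0"

lemma gen_add: "Y \<in> G \<Longrightarrow> X \<in> G \<Longrightarrow> X + Y \<in> G"
proof (induction Y rule: gen.induct)
  case gen0 then show ?case by simp
next
  case (genS Y g)
  then have "X + Y + Fstr E M1 g \<rho>0 \<in> G" by (intro gen.genS) auto
  then show ?case by (simp add: add.assoc)
qed

lemma gen_Fk: "X \<in> G \<Longrightarrow> k \<in> {1..m} \<Longrightarrow> Fk E M1 k X \<in> G"
proof (induction X rule: gen.induct)
  case gen0 then show ?case using posmap_0[OF pFk] gen.gen0 by simp
next
  case (genS X g)
  have "Fk E M1 k (X + Fstr E M1 g \<rho>0) = Fk E M1 k X + Fstr E M1 (g @ [k]) \<rho>0"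
    using pFk[OF genS.prems] by (simp add: posmap_def Fstr_snoc)
  moreover have "Fk E M1 k X + Fstr E M1 (g @ [k]) \<rho>0 \<in> G"
    using genS by (intro gen.genS) auto
  ultimately show ?case by simp
qed

lemma gen_sum: "finite K \<Longrightarrow> (\<And>k. k \<in> K \<Longrightarrow> A k \<in> G) \<Longrightarrow> (\<Sum>k\<in>K. A k) \<in> G"
  by (induction K rule: finite_induct) (auto intro: gen.gen0 gen_add)

lemma gen_F: "X \<in> G \<Longrightarrow> F X \<in> G"
  unfolding Fsum_def by (intro gen_sum gen_Fk) auto

lemma gen_rho: "\<rho>0 \<in> G"
  using gen.genS[OF gen.gen0, of "[]" m E M1 \<rho>0] by (simp add: Fstr_def)

lemma gen_Fi: "(F^^i) \<rho>0 \<in> G"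
  by (induction i) (auto simp: gen_rho gen_F)

lemma gen_T: "T j \<in> G"
  unfolding T_def by (intro gen_sum gen_Fi) auto

lemma gen_range: "X \<in> G \<Longrightarrow> range ((*v) X) \<subseteq> reachable_space m E M1 \<rho>0"
proof (induction X rule: gen.induct)
  case gen0 then show ?case by (auto simp: reachable_space_def cspan_vec vec.span_zero)
next
  case (genS X g)
  show ?case
  proof
    fix y assume "y \<in> range ((*v) (X + Fstr E M1 g \<rho>0))"
    then obtain v where v: "y = X *v v + Fstr E M1 g \<rho>0 *v v" by (auto simp: t3)
    have "Fstr E M1 g \<rho>0 *v v \<in> supp (Fstr E M1 g \<rho>0)"
      using supp_range[OF psd_Fstr[OF genS(2)]] by auto
    then have "Fstr E M1 g \<rho>0 *v v \<in> reachable_space m E M1 \<rho>0"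
      using genS(2) unfolding reachable_space_def cspan_vec by (blast intro: vec.span_base)
    moreover have "X *v v \<in> reachable_space m E M1 \<rho>0" using genS.IH by auto
    ultimately show "y \<in> reachable_space m E M1 \<rho>0"
      unfolding v reachable_space_def cspan_vec by (metis vec.span_add)
  qed
qed

lemma main: "reachable_space m E M1 \<rho>0 = supp (\<Sum>i<CARD('n). (F ^^ i) \<rho>0)"
proof -
  have eq: "(\<Sum>i<CARD('n). (F ^^ i) \<rho>0) = T (CARD('n) - 1)"
    unfolding T_def by simp
  show ?thesis unfolding eq
  proof
    show "supp (T (CARD('n) - 1)) \<subseteq> reachable_space m E M1 \<rho>0"
      using supp_range[OF psd_T] gen_range[OF gen_T] by simp
    have "supp (Fstr E M1 f \<rho>0) \<subseteq> supp (T (CARD('n) - 1))" if f: "f \<in> lists {1..m}" for f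
    proof -
      have "N (T (CARD('n) - 1)) \<subseteq> N (Fstr E M1 f \<rho>0)"
        using NT_final[of "length f"] NT_Fi[of "length f"] NFi_str[OF f] by blast
      then show ?thesis
        unfolding supp_ker[OF psd_T] supp_ker[OF psd_Fstr[OF f]] by (rule orthogonal_comp_anti_mono)
    qed
    then show "reachable_space m E M1 \<rho>0 \<subseteq> supp (T (CARD('n) - 1))"
      unfolding reachable_space_def cspan_vec
      by (intro vec.span_minimal) (auto simp: supp_span)
  qed
qed

end

theorem mainTheorem1:
  fixes m :: nat
    and E :: "nat \<Rightarrow> 'n::finite qop \<Rightarrow> 'n qop"
    and M0 M1 \<rho>0 :: "'n qop"
  assumes "\<forall>k\<in>{1..m}. super_operator (E k) \<and> trace_preserving (E k)"
    and "adj M0 ** M0 + adj M1 ** M1 = mat 1"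
    and "psd \<rho>0" and "tr \<rho>0 = 1"
  shows "reachable_space m E M1 \<rho>0 = supp (\<Sum>i<CARD('n). (Fsum m E M1 ^^ i) \<rho>0)"
  using main[of m E \<rho>0 M1] assms by blast


end
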